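(* Let $P,R$ be real constants, and let $\Omega_1,\Omega_3\in\mathbb{R}$. Work in the layer $D=\{(x,y,z):x,y\in\mathbb{R},\ -\tfrac12<z<\tfrac12\}$. Suppose $\mathbf v(x,y,z,t)=(v_x,v_y,v_z)$, $\theta(x,y,z,t)$ and $p(x,y,z,t)$ are smooth and satisfy $$\frac{\partial\mathbf v}{\partial t}=\mathbf v\times(\nabla\times\mathbf v)+P\,\mathbf v\times\boldsymbol\Omega+P\Delta\mathbf v+PR\,\theta\,\mathbf e_z-\nabla p,\qquad \frac{\partial\theta}{\partial t}=-(\mathbf v\cdot\nabla)\theta+v_z+\Delta\theta,\qquad \nabla\cdot\mathbf v=0$$ in $D$ with $\boldsymbol\Omega=(\Omega_1,0,\Omega_3)$, and suppose that $\mathbf v$ and $\theta$ depend only on $x$, $z$ (and $t$), not on $y$. Then for every $\Omega_2\in\mathbb{R}$ there is a modified pressure $\hat p$ such that $(\mathbf v,\theta,\hat p)$ satisfies the same three equations with $\boldsymbol\Omega=(\Omega_1,\Omega_2,\Omega_3)$.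
   Context: $\mathbf e_z=(0,0,1)$; $x,y$ are horizontal and $z$ vertical Cartesian coordinates. These are the dimensionless Boussinesq convection equations in a layer rotating with angular velocity $\boldsymbol\Omega$, with $P$ the Prandtl number and $R$ the Rayleigh number. No boundary conditions are imposed. *)

theory Defs
  imports "HOL-Analysis.Analysis"
begin

type_synonym field = "real \<Rightarrow> real \<Rightarrow> real \<Rightarrow> real \<Rightarrow> real"
  (* arguments: x y z t *)

definition layer :: "(real \<times> real \<times> real \<times> real) set" where
  "layer = {(x,y,z,t). -1/2 < z \<and> z < 1/2}"

definition pd :: "nat \<Rightarrow> field \<Rightarrow> field" where
  "pd i f = (\<lambda>x y z t.
     if i = 0 then deriv (\<lambda>s. f s y z t) x
     else if i = 1 then deriv (\<lambda>s. f x s z t) y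
     else if i = 2 then deriv (\<lambda>s. f x y s t) z
     else deriv (\<lambda>s. f x y z s) t)"

definition pdiff :: "nat \<Rightarrow> field \<Rightarrow> real \<Rightarrow> real \<Rightarrow> real \<Rightarrow> real \<Rightarrow> bool" where
  "pdiff i f x y z t \<longleftrightarrow>
     (if i = 0 then (\<lambda>s. f s y z t) differentiable (at x)
      else if i = 1 then (\<lambda>s. f x s z t) differentiable (at y)
      else if i = 2 then (\<lambda>s. f x y s t) differentiable (at z)
      else (\<lambda>s. f x y z s) differentiable (at t))"

definition iter_pd :: "nat list \<Rightarrow> field \<Rightarrow> field" where
  "iter_pd ds f = foldr pd ds f"

definition smooth_on :: "(real \<times> real \<times> real \<times> real) set \<Rightarrow> field \<Rightarrow> bool" where
  "smooth_on U f \<longleftrightarrow>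
     (\<forall>ds. set ds \<subseteq> {0..3} \<longrightarrow>
        continuous_on U (\<lambda>(x,y,z,t). iter_pd ds f x y z t) \<and>
        (\<forall>i\<le>3. \<forall>(x,y,z,t)\<in>U. pdiff i (iter_pd ds f) x y z t))"

abbreviation "dX \<equiv> pd 0"
abbreviation "dY \<equiv> pd 1"
abbreviation "dZ \<equiv> pd 2"
abbreviation "dT \<equiv> pd 3"

definition lap :: "field \<Rightarrow> field" where
  "lap f = (\<lambda>x y z t. dX (dX f) x y z t + dY (dY f) x y z t + dZ (dZ f) x y z t)"

text \<open>The rotating Boussinesq equations, written componentwise, holding at every
  point of D x R, with Omega = (O1,O2,O3).
  curl v = (w1,w2,w3) with w1 = dy vz - dz vy, w2 = dz vx - dx vz, w3 = dx vy - dy vx;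
  v x curl v = (vy w3 - vz w2, vz w1 - vx w3, vx w2 - vy w1);
  v x Omega = (vy O3 - vz O2, vz O1 - vx O3, vx O2 - vy O1).\<close>
definition boussinesq ::
  "real \<Rightarrow> real \<Rightarrow> real \<Rightarrow> real \<Rightarrow> real \<Rightarrow> field \<Rightarrow> field \<Rightarrow> field \<Rightarrow> field \<Rightarrow> field \<Rightarrow> bool" where
  "boussinesq P R O1 O2 O3 vx vy vz \<theta> p \<longleftrightarrow>
    (\<forall>(x,y,z,t)\<in>layer.
      (let w1 = dY vz x y z t - dZ vy x y z t;
           w2 = dZ vx x y z t - dX vz x y z t;
           w3 = dX vy x y z t - dY vx x y z t;
           a = vx x y z t; b = vy x y z t; c = vz x y z t
       in
       dT vx x y z t = (b * w3 - c * w2) + P * (b * O3 - c * O2)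
                        + P * lap vx x y z t - dX p x y z t
     \<and> dT vy x y z t = (c * w1 - a * w3) + P * (c * O1 - a * O3)
                        + P * lap vy x y z t - dY p x y z t
     \<and> dT vz x y z t = (a * w2 - b * w1) + P * (a * O2 - b * O1)
                        + P * lap vz x y z t + P * R * \<theta> x y z t - dZ p x y z t
     \<and> dT \<theta> x y z t = - (a * dX \<theta> x y z t + b * dY \<theta> x y z t + c * dZ \<theta> x y z t)
                        + c + lap \<theta> x y z t
     \<and> dX vx x y z t + dY vy x y z t + dZ vz x y z t = 0))"

definition indep_y :: "field \<Rightarrow> bool" where
  "indep_y f \<longleftrightarrow> (\<forall>x y y' z t. -1/2 < z \<and> z < 1/2 \<longrightarrow> f x y z t = f x y' z t)"

end

theory Submission
  imports Defs
begin


lemma layer_iff[simp]: "(x,y,z,t) \<in> layer \<longleftrightarrow> -1/2 < z \<and> z < 1/2"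
  by (simp add: layer_def)

lemma layer_ball[simp]: "(\<forall>(x,y,z,t)\<in>layer. P x y z t) \<longleftrightarrow> (\<forall>x y z t. -1/2 < z \<and> z < 1/2 \<longrightarrow> P x y z t)"
  by (auto simp: layer_def)

lemma open_layer: "open layer"
proof -
  have "layer = (\<lambda>p. fst (snd (snd p))) -` {-1/2<..<1/2}" by (auto simp: layer_def)
  moreover have "open ((\<lambda>p::real\<times>real\<times>real\<times>real. fst (snd (snd p))) -` {-1/2<..<1/2})"
    by (auto intro!: open_vimage continuous_intros)
  ultimately show ?thesis by simp
qed

lemma zline_ev:
  assumes "-1/2 < (z::real)" "z < 1/2" "\<forall>(x,y,z,t)\<in>layer. f x y z t = g x y z t"
  shows "\<forall>\<^sub>F s in nhds z. f x y s t = g x y s t"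
proof -
  have "\<forall>\<^sub>F s in nhds z. s \<in> {-1/2<..<1/2::real}"
    using assms by (intro eventually_nhds_in_open) auto
  then show ?thesis by eventually_elim (use assms in auto)
qed

lemma pd_local:
  assumes "\<forall>(x,y,z,t)\<in>layer. f x y z t = g x y z t" "(x,y,z,t) \<in> layer"
  shows "pd i f x y z t = pd i g x y z t"
proof -
  have z: "-1/2 < z" "z < 1/2" using assms by auto
  have e: "\<And>s. f s y z t = g s y z t" "\<And>s. f x s z t = g x s z t" "\<And>s. f x y z s = g x y z s" "f x y z = g x y z"
    using assms z by auto
  have "deriv (\<lambda>s. f x y s t) z = deriv (\<lambda>s. g x y s t) z"
    by (rule deriv_cong_ev[OF zline_ev[OF z assms(1)] refl])
  then show ?thesis using e unfolding pd_def by simp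
qed

lemma pdiff_local:
  assumes "\<forall>(x,y,z,t)\<in>layer. f x y z t = g x y z t" "(x,y,z,t) \<in> layer"
    "pdiff i g x y z t"
  shows "pdiff i f x y z t"
proof -
  have z: "-1/2 < z" "z < 1/2" using assms by auto
  have e: "\<And>s. f s y z t = g s y z t" "\<And>s. f x s z t = g x s z t" "\<And>s. f x y z s = g x y z s" "f x y z = g x y z"
    using assms z by auto
  have "(\<lambda>s. f x y s t) differentiable at z" if "(\<lambda>s. g x y s t) differentiable at z"
  proof -
    from that obtain D where "((\<lambda>s. g x y s t) has_field_derivative D) (at z)"
      using DERIV_deriv_iff_real_differentiable by blast
    then have "((\<lambda>s. f x y s t) has_field_derivative D) (at z)"
      by (rule has_field_derivative_transform_within_open[where S="{-1/2<..<1/2}"])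
         (use z assms(1) in auto)
    then show ?thesis using real_differentiable_def by blast
  qed
  then show ?thesis using assms(3) e unfolding pdiff_def by (simp split: if_splits)
qed

lemma smooth_closure:
  assumes cont: "\<And>H. H\<in>S \<Longrightarrow> continuous_on layer (\<lambda>(x,y,z,t). H x y z t)"
  and dif: "\<And>H i x y z t. H\<in>S \<Longrightarrow> i \<le> 3 \<Longrightarrow> (x,y,z,t)\<in>layer \<Longrightarrow> pdiff i H x y z t"
  and clo: "\<And>H i. H\<in>S \<Longrightarrow> i \<le> 3 \<Longrightarrow> \<exists>H'\<in>S. \<forall>(x,y,z,t)\<in>layer. pd i H x y z t = H' x y z t"
  and F: "F \<in> S"
  shows "smooth_on layer F"
proof -
  have rep: "set ds \<subseteq> {0..3} \<Longrightarrow> \<exists>H\<in>S. \<forall>(x,y,z,t)\<in>layer. iter_pd ds F x y z t = H x y z t" for ds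
  proof (induction ds)
    case Nil then show ?case using F by (auto simp: iter_pd_def)
  next
    case (Cons d ds)
    then obtain H where H: "H \<in> S" "\<forall>(x,y,z,t)\<in>layer. iter_pd ds F x y z t = H x y z t" by auto
    have d: "d \<le> 3" using Cons.prems by auto
    obtain H' where H': "H' \<in> S" "\<forall>(x,y,z,t)\<in>layer. pd d H x y z t = H' x y z t"
      using clo[OF H(1) d] by blast
    have "\<forall>(x,y,z,t)\<in>layer. iter_pd (d#ds) F x y z t = H' x y z t"
      using pd_local[OF H(2)] H'(2) by (auto simp: iter_pd_def)
    then show ?case using H' by blast
  qed
  show ?thesis unfolding smooth_on_def
  proof (intro allI impI)
    fix ds :: "nat list" assume "set ds \<subseteq> {0..3}"
    then obtain H where H: "H \<in> S" "\<forall>(x,y,z,t)\<in>layer. iter_pd ds F x y z t = H x y z t"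
      using rep by blast
    have "continuous_on layer (\<lambda>(x,y,z,t). iter_pd ds F x y z t)"
      by (rule continuous_on_eq[OF cont[OF H(1)]]) (use H(2) in \<open>auto simp: layer_def\<close>)
    moreover have "\<forall>i\<le>3. \<forall>(x,y,z,t)\<in>layer. pdiff i (iter_pd ds F) x y z t"
      using pdiff_local[OF H(2)] dif[OF H(1)] by auto
    ultimately show "continuous_on layer (\<lambda>(x,y,z,t). iter_pd ds F x y z t) \<and>
        (\<forall>i\<le>3. \<forall>(x,y,z,t)\<in>layer. pdiff i (iter_pd ds F) x y z t)" by blast
  qed
qed

lemma smooth_cont: "smooth_on layer h \<Longrightarrow> continuous_on layer (\<lambda>(x,y,z,t). h x y z t)"
  unfolding smooth_on_def by (drule spec[of _ "[]"]) (simp add: iter_pd_def)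

lemma smooth_pdiff: "smooth_on layer h \<Longrightarrow> i \<le> 3 \<Longrightarrow> -1/2 < z \<Longrightarrow> z < 1/2 \<Longrightarrow> pdiff i h x y z t"
  unfolding smooth_on_def by (drule spec[of _ "[]"]) (simp add: iter_pd_def)

lemma smooth_pd: "smooth_on layer h \<Longrightarrow> i \<le> 3 \<Longrightarrow> smooth_on layer (pd i h)"
  unfolding smooth_on_def
proof (intro allI impI)
  fix ds :: "nat list"
  assume a: "\<forall>ds. set ds \<subseteq> {0..3} \<longrightarrow>
         continuous_on layer (\<lambda>(x, y, z, t). iter_pd ds h x y z t) \<and>
         (\<forall>i\<le>3. \<forall>(x, y, z, t)\<in>layer. pdiff i (iter_pd ds h) x y z t)" "i \<le> 3" "set ds \<subseteq> {0..3}"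
  have "iter_pd ds (pd i h) = iter_pd (ds @ [i]) h" by (simp add: iter_pd_def)
  then show "continuous_on layer (\<lambda>(x, y, z, t). iter_pd ds (pd i h) x y z t) \<and>
         (\<forall>ia\<le>3. \<forall>(x, y, z, t)\<in>layer. pdiff ia (iter_pd ds (pd i h)) x y z t)"
  proof -
    have "set (ds @ [i]) \<subseteq> {0..3}" using a(2,3) by auto
    then have "continuous_on layer (\<lambda>(x, y, z, t). iter_pd (ds @ [i]) h x y z t) \<and>
         (\<forall>j\<le>3. \<forall>(x, y, z, t)\<in>layer. pdiff j (iter_pd (ds @ [i]) h) x y z t)"
      by (rule a(1)[rule_format])
    then show ?thesis unfolding \<open>iter_pd ds (pd i h) = iter_pd (ds @ [i]) h\<close> .
  qed
qed

lemma zu_bound: assumes "-1/2 < (z::real)" "z < 1/2" "0 \<le> u" "u \<le> 1"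
  shows "-1/2 < z*u" "z*u < 1/2"
proof -
  have "\<bar>z*u\<bar> \<le> \<bar>z\<bar>" using assms by (simp add: abs_mult mult_left_le)
  then show "-1/2 < z*u" "z*u < 1/2" using assms by linarith+
qed

lemma comp_layer:
  assumes "continuous_on layer (\<lambda>(x,y,z,t). h x y z t)"
    "continuous_on A (\<lambda>q. (f1 q, f2 q, f3 q, f4 q))"
    "\<And>q. q \<in> A \<Longrightarrow> -1/2 < f3 q \<and> f3 q < 1/2"
  shows "continuous_on A (\<lambda>q. h (f1 q) (f2 q) (f3 q) (f4 q))"
  using continuous_on_compose2[OF assms(1) assms(2)] assms(3) by (auto simp: layer_def)

lemma leib:
  fixes k k' :: "real \<Rightarrow> real \<Rightarrow> real"
  assumes "open U" "convex U" "s0 \<in> U"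
    "\<And>s u. s \<in> U \<Longrightarrow> u \<in> {0..1} \<Longrightarrow> ((\<lambda>s. k s u) has_field_derivative k' s u) (at s)"
    "continuous_on (U \<times> {0..1}) (\<lambda>(s,u). k' s u)"
    "\<And>s. s \<in> U \<Longrightarrow> continuous_on {0..1} (k s)"
  shows "((\<lambda>s. integral {0..1} (k s)) has_field_derivative integral {0..1} (k' s0)) (at s0)"
proof -
  have "((\<lambda>s. integral (cbox 0 1) (k s)) has_field_derivative integral (cbox 0 1) (k' s0)) (at s0 within U)"
  proof (rule leibniz_rule_field_derivative[where f=k and fx=k' and U=U and a=0 and b=1])
    show "\<And>x t. x \<in> U \<Longrightarrow> t \<in> cbox 0 1 \<Longrightarrow> ((\<lambda>x. k x t) has_field_derivative k' x t) (at x within U)"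
      using assms(4) by (auto intro: has_field_derivative_at_within)
    show "\<And>x. x \<in> U \<Longrightarrow> k x integrable_on cbox 0 1"
      using assms(6) by (auto intro: integrable_continuous_interval)
    show "continuous_on (U \<times> cbox 0 1) (\<lambda>(x, t). k' x t)" using assms(5) by simp
    show "s0 \<in> U" by (rule assms(3))
    show "convex U" by (rule assms(2))
  qed
  then show ?thesis using assms(1,3) at_within_open[of s0 U] by simp
qed

lemma pd_deriv:
  assumes "smooth_on layer h" "-1/2 < z" "z < 1/2"
  shows "((\<lambda>s. h s y z t) has_field_derivative pd 0 h x y z t) (at x)"
    "((\<lambda>s. h x s z t) has_field_derivative pd 1 h x y z t) (at y)"
    "((\<lambda>s. h x y s t) has_field_derivative pd 2 h x y z t) (at z)"
    "((\<lambda>s. h x y z s) has_field_derivative pd 3 h x y z t) (at t)"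
proof -
  have p: "pdiff i h x y z t" if "i \<le> 3" for i by (rule smooth_pdiff) (use assms that in auto)
  show "((\<lambda>s. h s y z t) has_field_derivative pd 0 h x y z t) (at x)"
    using p[of 0] by (simp add: pdiff_def pd_def DERIV_deriv_iff_real_differentiable)
  show "((\<lambda>s. h x s z t) has_field_derivative pd 1 h x y z t) (at y)"
    using p[of 1] by (simp add: pdiff_def pd_def DERIV_deriv_iff_real_differentiable)
  show "((\<lambda>s. h x y s t) has_field_derivative pd 2 h x y z t) (at z)"
    using p[of 2] by (simp add: pdiff_def pd_def DERIV_deriv_iff_real_differentiable)
  show "((\<lambda>s. h x y z s) has_field_derivative pd 3 h x y z t) (at t)"
    using p[of 3] by (simp add: pdiff_def pd_def DERIV_deriv_iff_real_differentiable)
qed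



definition I2 :: "field \<Rightarrow> field" where
  "I2 g = (\<lambda>x y z t. z * integral {0..1} (\<lambda>u. g x y (z*u) t))"

lemma I2_cont:
  assumes hc: "continuous_on layer (\<lambda>(x,y,z,t). h x y z t)"
  shows "continuous_on layer (\<lambda>(x,y,z,t). I2 h x y z t)"
proof -
  have c: "continuous_on (layer \<times> cbox 0 1)
     (\<lambda>q. h (fst (fst q)) (fst (snd (fst q))) (fst (snd (snd (fst q))) * snd q) (snd (snd (snd (fst q)))))"
  proof (rule comp_layer[OF hc])
    show "continuous_on (layer \<times> cbox 0 1) (\<lambda>q. (fst (fst q), fst (snd (fst q)), fst (snd (snd (fst q))) * snd q, snd (snd (snd (fst q)))))"
      by (intro continuous_intros)
    fix q :: "(real \<times> real \<times> real \<times> real) \<times> real" assume "q \<in> layer \<times> cbox 0 1"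
    then show "-1/2 < fst (snd (snd (fst q))) * snd q \<and> fst (snd (snd (fst q))) * snd q < 1/2"
      using zu_bound[of "fst (snd (snd (fst q)))" "snd q"]
      by (cases q) (auto simp: layer_def)
  qed
  have "continuous_on layer (\<lambda>p. integral (cbox 0 1) (\<lambda>u. h (fst p) (fst (snd p)) (fst (snd (snd p)) * u) (snd (snd (snd p)))))"
    by (rule integral_continuous_on_param) (use c in \<open>simp add: case_prod_beta\<close>)
  then have "continuous_on layer (\<lambda>p. fst (snd (snd p)) * integral {0..1} (\<lambda>u. h (fst p) (fst (snd p)) (fst (snd (snd p)) * u) (snd (snd (snd p)))))"
    by (intro continuous_intros) simp
  then show ?thesis
    by (rule continuous_on_eq) (auto simp: I2_def)
qed

lemma I2_d0:
  assumes h: "smooth_on layer h" and z: "-1/2 < z" "z < 1/2"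
  shows "((\<lambda>s. I2 h s y z t) has_field_derivative I2 (pd 0 h) x y z t) (at x)"
proof -
  have hc: "continuous_on layer (\<lambda>(x,y,z,t). pd 0 h x y z t)"
    by (rule smooth_cont[OF smooth_pd[OF h]]) simp
  have hc0: "continuous_on layer (\<lambda>(x,y,z,t). h x y z t)"
    by (rule smooth_cont[OF h])
  have "((\<lambda>s. integral {0..1} (\<lambda>u. h s y (z*u) t)) has_field_derivative integral {0..1} (\<lambda>u. pd 0 h x y (z*u) t)) (at x)"
  proof (rule leib[where U=UNIV and k="\<lambda>s u. h s y (z*u) t" and k'="\<lambda>s u. pd 0 h s y (z*u) t"])
    show "\<And>s u. s \<in> UNIV \<Longrightarrow> u \<in> {0..1} \<Longrightarrow> ((\<lambda>s. h s y (z * u) t) has_field_derivative pd 0 h s y (z * u) t) (at s)"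
      using zu_bound[OF z] by (auto intro!: pd_deriv(1)[OF h])
    have "continuous_on (UNIV \<times> {0..1}) (\<lambda>q. pd 0 h (fst q) y (z * snd q) t)"
      using zu_bound[OF z] by (intro comp_layer[OF hc]) (auto intro!: continuous_intros)
    then show "continuous_on (UNIV \<times> {0..1}) (\<lambda>(s, u). pd 0 h s y (z * u) t)"
      by (simp add: case_prod_beta)
    show "\<And>s. s \<in> UNIV \<Longrightarrow> continuous_on {0..1} (\<lambda>u. h s y (z * u) t)"
      using zu_bound[OF z] by (intro comp_layer[OF hc0]) (auto intro!: continuous_intros)
  qed auto
  then show ?thesis unfolding I2_def by (rule DERIV_cmult)
qed

lemma I2_d1:
  assumes h: "smooth_on layer h" and z: "-1/2 < z" "z < 1/2"
  shows "((\<lambda>s. I2 h x s z t) has_field_derivative I2 (pd 1 h) x y z t) (at y)"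
proof -
  have hc: "continuous_on layer (\<lambda>(x,y,z,t). pd 1 h x y z t)"
    by (rule smooth_cont[OF smooth_pd[OF h]]) simp
  have hc0: "continuous_on layer (\<lambda>(x,y,z,t). h x y z t)"
    by (rule smooth_cont[OF h])
  have "((\<lambda>s. integral {0..1} (\<lambda>u. h x s (z*u) t)) has_field_derivative integral {0..1} (\<lambda>u. pd 1 h x y (z*u) t)) (at y)"
  proof (rule leib[where U=UNIV and k="\<lambda>s u. h x s (z*u) t" and k'="\<lambda>s u. pd 1 h x s (z*u) t"])
    show "\<And>s u. s \<in> UNIV \<Longrightarrow> u \<in> {0..1} \<Longrightarrow> ((\<lambda>s. h x s (z * u) t) has_field_derivative pd 1 h x s (z * u) t) (at s)"
      using zu_bound[OF z] by (intro pd_deriv(2)[OF h]) auto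
    have "continuous_on (UNIV \<times> {0..1}) (\<lambda>q. pd 1 h x (fst q) (z * snd q) t)"
      using zu_bound[OF z] by (intro comp_layer[OF hc]) (auto intro!: continuous_intros)
    then show "continuous_on (UNIV \<times> {0..1}) (\<lambda>(s, u). pd 1 h x s (z * u) t)"
      by (simp add: case_prod_beta)
    show "\<And>s. s \<in> UNIV \<Longrightarrow> continuous_on {0..1} (\<lambda>u. h x s (z * u) t)"
      using zu_bound[OF z] by (intro comp_layer[OF hc0]) (auto intro!: continuous_intros)
  qed auto
  then show ?thesis unfolding I2_def by (rule DERIV_cmult)
qed

lemma I2_d3:
  assumes h: "smooth_on layer h" and z: "-1/2 < z" "z < 1/2"
  shows "((\<lambda>s. I2 h x y z s) has_field_derivative I2 (pd 3 h) x y z t) (at t)"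
proof -
  have hc: "continuous_on layer (\<lambda>(x,y,z,t). pd 3 h x y z t)"
    by (rule smooth_cont[OF smooth_pd[OF h]]) simp
  have hc0: "continuous_on layer (\<lambda>(x,y,z,t). h x y z t)"
    by (rule smooth_cont[OF h])
  have "((\<lambda>s. integral {0..1} (\<lambda>u. h x y (z*u) s)) has_field_derivative integral {0..1} (\<lambda>u. pd 3 h x y (z*u) t)) (at t)"
  proof (rule leib[where U=UNIV and k="\<lambda>s u. h x y (z*u) s" and k'="\<lambda>s u. pd 3 h x y (z*u) s"])
    show "\<And>s u. s \<in> UNIV \<Longrightarrow> u \<in> {0..1} \<Longrightarrow> ((\<lambda>s. h x y (z * u) s) has_field_derivative pd 3 h x y (z * u) s) (at s)"
      using zu_bound[OF z] by (intro pd_deriv(4)[OF h]) auto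
    have "continuous_on (UNIV \<times> {0..1}) (\<lambda>q. pd 3 h x y (z * snd q) (fst q))"
      using zu_bound[OF z] by (intro comp_layer[OF hc]) (auto intro!: continuous_intros)
    then show "continuous_on (UNIV \<times> {0..1}) (\<lambda>(s, u). pd 3 h x y (z * u) s)"
      by (simp add: case_prod_beta)
    show "\<And>s. s \<in> UNIV \<Longrightarrow> continuous_on {0..1} (\<lambda>u. h x y (z * u) s)"
      using zu_bound[OF z] by (intro comp_layer[OF hc0]) (auto intro!: continuous_intros)
  qed auto
  then show ?thesis unfolding I2_def by (rule DERIV_cmult)
qed

lemma I2_d2:
  assumes h: "smooth_on layer h" and z: "-1/2 < z" "z < 1/2"
  shows "((\<lambda>s. I2 h x y s t) has_field_derivative h x y z t) (at z)"
proof -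
  have hc: "continuous_on layer (\<lambda>(x,y,z,t). pd 2 h x y z t)"
    by (rule smooth_cont[OF smooth_pd[OF h]]) simp
  have hc0: "continuous_on layer (\<lambda>(x,y,z,t). h x y z t)"
    by (rule smooth_cont[OF h])
  let ?U = "{-1/2<..<1/2::real}"
  have D: "((\<lambda>s. h x y (s*u) t) has_field_derivative pd 2 h x y (s*u) t * u) (at s)"
    if "s \<in> ?U" "u \<in> {0..1}" for s u
  proof -
    have "-1/2 < s*u" "s*u < 1/2" using zu_bound[of s u] that by auto
    then have "((\<lambda>w. h x y w t) has_field_derivative pd 2 h x y (s*u) t) (at (s*u))"
      by (rule pd_deriv(3)[OF h])
    then show ?thesis by (rule DERIV_chain2) (auto intro!: derivative_eq_intros)
  qed
  have I: "((\<lambda>s. integral {0..1} (\<lambda>u. h x y (s*u) t)) has_field_derivative integral {0..1} (\<lambda>u. pd 2 h x y (z*u) t * u)) (at z)"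
  proof (rule leib[where U="?U" and k="\<lambda>s u. h x y (s*u) t" and k'="\<lambda>s u. pd 2 h x y (s*u) t * u"])
    show "\<And>s u. s \<in> ?U \<Longrightarrow> u \<in> {0..1} \<Longrightarrow> ((\<lambda>s. h x y (s * u) t) has_field_derivative pd 2 h x y (s * u) t * u) (at s)"
      by (rule D)
    have "continuous_on (?U \<times> {0..1}) (\<lambda>q. pd 2 h x y (fst q * snd q) t)"
      using zu_bound by (intro comp_layer[OF hc]) (auto intro!: continuous_intros)
    then have "continuous_on (?U \<times> {0..1}) (\<lambda>q. pd 2 h x y (fst q * snd q) t * snd q)"
      by (intro continuous_intros)
    then show "continuous_on (?U \<times> {0..1}) (\<lambda>(s, u). pd 2 h x y (s * u) t * u)"
      by (simp add: case_prod_beta)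
    show "\<And>s. s \<in> ?U \<Longrightarrow> continuous_on {0..1} (\<lambda>u. h x y (s * u) t)"
      using zu_bound by (intro comp_layer[OF hc0]) (auto intro!: continuous_intros)
  qed (use z in auto)
  have P: "((\<lambda>s. I2 h x y s t) has_field_derivative
      z * integral {0..1} (\<lambda>u. pd 2 h x y (z*u) t * u) + 1 * integral {0..1} (\<lambda>u. h x y (z*u) t)) (at z)"
    unfolding I2_def by (rule DERIV_mult'[OF DERIV_ident I])
  have c1: "continuous_on {0..1} (\<lambda>u. h x y (z*u) t)"
    using zu_bound[OF z] by (intro comp_layer[OF hc0]) (auto intro!: continuous_intros)
  have c2: "continuous_on {0..1} (\<lambda>u. pd 2 h x y (z*u) t)"
    using zu_bound[OF z] by (intro comp_layer[OF hc]) (auto intro!: continuous_intros)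
  have "((\<lambda>u. u * (pd 2 h x y (z*u) t * z) + 1 * h x y (z*u) t) has_integral (1 * h x y (z*1) t - 0 * h x y (z*0) t)) {0..1}"
  proof (rule fundamental_theorem_of_calculus)
    fix u :: real assume u: "u \<in> {0..1}"
    have "-1/2 < z*u" "z*u < 1/2" using zu_bound[OF z] u by auto
    then have "((\<lambda>w. h x y w t) has_field_derivative pd 2 h x y (z*u) t) (at (z*u))"
      by (rule pd_deriv(3)[OF h])
    then have "((\<lambda>u. h x y (z*u) t) has_field_derivative pd 2 h x y (z*u) t * z) (at u)"
      by (rule DERIV_chain2) (auto intro!: derivative_eq_intros)
    then have "((\<lambda>u. u * h x y (z*u) t) has_field_derivative u * (pd 2 h x y (z*u) t * z) + 1 * h x y (z*u) t) (at u)"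
      by (rule DERIV_mult'[OF DERIV_ident])
    then show "((\<lambda>u. u * h x y (z*u) t) has_vector_derivative u * (pd 2 h x y (z*u) t * z) + 1 * h x y (z*u) t) (at u within {0..1})"
      by (simp add: has_real_derivative_iff_has_vector_derivative[symmetric] has_field_derivative_at_within)
  qed simp
  then have "integral {0..1} (\<lambda>u. u * (pd 2 h x y (z*u) t * z) + 1 * h x y (z*u) t) = 1 * h x y (z*1) t - 0 * h x y (z*0) t"
    by (rule integral_unique)
  moreover have "integral {0..1} (\<lambda>u. u * (pd 2 h x y (z*u) t * z) + 1 * h x y (z*u) t)
      = z * integral {0..1} (\<lambda>u. pd 2 h x y (z*u) t * u) + 1 * integral {0..1} (\<lambda>u. h x y (z*u) t)"
  proof -
    have "integral {0..1} (\<lambda>u. u * (pd 2 h x y (z*u) t * z) + 1 * h x y (z*u) t)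
      = integral {0..1} (\<lambda>u. z * (pd 2 h x y (z*u) t * u)) + integral {0..1} (\<lambda>u. h x y (z*u) t)"
    proof -
      have e: "(\<lambda>u. u * (pd 2 h x y (z*u) t * z) + 1 * h x y (z*u) t) = (\<lambda>u. z * (pd 2 h x y (z*u) t * u) + h x y (z*u) t)"
        by (simp add: algebra_simps)
      show ?thesis unfolding e
        by (rule integral_add) (auto intro!: integrable_continuous_interval continuous_intros c1 c2)
    qed
    then show ?thesis by simp
  qed
  ultimately show ?thesis using P by simp
qed

lemma I2_ftc:
  assumes h: "smooth_on layer h" and z: "-1/2 < z" "z < 1/2"
  shows "I2 (pd 2 h) x y z t = h x y z t - h x y 0 t"
proof -
  have "((\<lambda>u. pd 2 h x y (z*u) t * z) has_integral (h x y (z*1) t - h x y (z*0) t)) {0..1}"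
  proof (rule fundamental_theorem_of_calculus)
    fix u :: real assume u: "u \<in> {0..1}"
    have "-1/2 < z*u" "z*u < 1/2" using zu_bound[OF z] u by auto
    then have "((\<lambda>w. h x y w t) has_field_derivative pd 2 h x y (z*u) t) (at (z*u))"
      by (rule pd_deriv(3)[OF h])
    then have "((\<lambda>u. h x y (z*u) t) has_field_derivative pd 2 h x y (z*u) t * z) (at u)"
      by (rule DERIV_chain2) (auto intro!: derivative_eq_intros)
    then show "((\<lambda>u. h x y (z*u) t) has_vector_derivative pd 2 h x y (z*u) t * z) (at u within {0..1})"
      by (simp add: has_real_derivative_iff_has_vector_derivative[symmetric] has_field_derivative_at_within)
  qed simp
  then have "integral {0..1} (\<lambda>u. pd 2 h x y (z*u) t * z) = h x y (z*1) t - h x y (z*0) t"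
    by (rule integral_unique)
  then show ?thesis unfolding I2_def by (simp add: mult.commute)
qed


lemma smooth_iter: "smooth_on layer g \<Longrightarrow> set ds \<subseteq> {0..3} \<Longrightarrow> smooth_on layer (iter_pd ds g)"
proof (induction ds)
  case Nil then show ?case by (simp add: iter_pd_def)
next
  case (Cons d ds)
  then have "smooth_on layer (pd d (iter_pd ds g))" by (intro smooth_pd) auto
  then show ?case by (simp add: iter_pd_def)
qed

lemma pd_I2:
  assumes h: "smooth_on layer h" and z: "-1/2 < z" "z < 1/2" and i: "i \<le> 3"
  shows "pd i (I2 h) x y z t = (if i = 2 then h x y z t else I2 (pd i h) x y z t)"
    "pdiff i (I2 h) x y z t"
proof -
  have "i = 0 \<or> i = 1 \<or> i = 2 \<or> i = 3" using i by auto
  then show "pd i (I2 h) x y z t = (if i = 2 then h x y z t else I2 (pd i h) x y z t)"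
    using I2_d0[OF h z, of y t x] I2_d1[OF h z, of x t y] I2_d2[OF h z, of x y t] I2_d3[OF h z, of x y t]
    by (auto simp: pd_def DERIV_imp_deriv)
  show "pdiff i (I2 h) x y z t"
    using \<open>i = 0 \<or> i = 1 \<or> i = 2 \<or> i = 3\<close>
      I2_d0[OF h z, of y t x] I2_d1[OF h z, of x t y] I2_d2[OF h z, of x y t] I2_d3[OF h z, of x y t]
    by (auto simp: pdiff_def real_differentiable_def)
qed

lemma smooth_I2:
  assumes g: "smooth_on layer g"
  shows "smooth_on layer (I2 g)"
proof (rule smooth_closure[where S="{iter_pd ds g |ds. set ds \<subseteq> {0..3}} \<union> {I2 (iter_pd ds g) |ds. set ds \<subseteq> {0..3}}"])
  fix H assume "H \<in> {iter_pd ds g |ds. set ds \<subseteq> {0..3}} \<union> {I2 (iter_pd ds g) |ds. set ds \<subseteq> {0..3}}"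
  then obtain ds where ds: "set ds \<subseteq> {0..3}" and H: "H = iter_pd ds g \<or> H = I2 (iter_pd ds g)" by blast
  have sm: "smooth_on layer (iter_pd ds g)" by (rule smooth_iter[OF g ds])
  show "continuous_on layer (\<lambda>(x,y,z,t). H x y z t)"
    using H smooth_cont[OF sm] I2_cont[OF smooth_cont[OF sm]] by auto
  show "\<And>i x y z t. i \<le> 3 \<Longrightarrow> (x,y,z,t)\<in>layer \<Longrightarrow> pdiff i H x y z t"
    using H smooth_pdiff[OF sm] pd_I2(2)[OF sm] by auto
  show "\<And>i. i \<le> 3 \<Longrightarrow> \<exists>H'\<in>{iter_pd ds g |ds. set ds \<subseteq> {0..3}} \<union> {I2 (iter_pd ds g) |ds. set ds \<subseteq> {0..3}}.
      \<forall>(x,y,z,t)\<in>layer. pd i H x y z t = H' x y z t"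
  proof -
    fix i :: nat assume i: "i \<le> 3"
    have ids: "set (i#ds) \<subseteq> {0..3}" using ds i by auto
    have e: "pd i (iter_pd ds g) = iter_pd (i#ds) g" by (simp add: iter_pd_def)
    show "\<exists>H'\<in>{iter_pd ds g |ds. set ds \<subseteq> {0..3}} \<union> {I2 (iter_pd ds g) |ds. set ds \<subseteq> {0..3}}.
      \<forall>(x,y,z,t)\<in>layer. pd i H x y z t = H' x y z t"
    proof (cases "H = iter_pd ds g")
      case True
      then show ?thesis using ids e by blast
    next
      case False
      then have HI: "H = I2 (iter_pd ds g)" using H by blast
      show ?thesis
      proof (cases "i = 2")
        case True
        have "\<forall>(x,y,z,t)\<in>layer. pd i H x y z t = iter_pd ds g x y z t"
          using pd_I2(1)[OF sm _ _ i] True HI by auto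
        then show ?thesis using ds by blast
      next
        case False
        have "\<forall>(x,y,z,t)\<in>layer. pd i H x y z t = I2 (iter_pd (i#ds) g) x y z t"
          using pd_I2(1)[OF sm _ _ i] False HI e by auto
        then show ?thesis using ids by blast
      qed
    qed
  qed
next
  show "I2 g \<in> {iter_pd ds g |ds. set ds \<subseteq> {0..3}} \<union> {I2 (iter_pd ds g) |ds. set ds \<subseteq> {0..3}}"
    by (rule UnI2, rule CollectI, rule exI[of _ "[]"]) (simp add: iter_pd_def)
qed



definition I0 :: "field \<Rightarrow> field" where
  "I0 g = (\<lambda>x y z t. x * integral {0..1} (\<lambda>u. g (x*u) y z t))"

lemma I0_cont:
  assumes hc: "continuous_on layer (\<lambda>(x,y,z,t). h x y z t)"
  shows "continuous_on layer (\<lambda>(x,y,z,t). I0 h x y z t)"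
proof -
  have c: "continuous_on (layer \<times> cbox 0 1)
     (\<lambda>q. h (fst (fst q) * snd q) (fst (snd (fst q))) (fst (snd (snd (fst q)))) (snd (snd (snd (fst q)))))"
  proof (rule comp_layer[OF hc])
    show "continuous_on (layer \<times> cbox 0 1) (\<lambda>q. (fst (fst q) * snd q, fst (snd (fst q)), fst (snd (snd (fst q))), snd (snd (snd (fst q)))))"
      by (intro continuous_intros)
    fix q :: "(real \<times> real \<times> real \<times> real) \<times> real" assume "q \<in> layer \<times> cbox 0 1"
    then show "-1/2 < fst (snd (snd (fst q))) \<and> fst (snd (snd (fst q))) < 1/2"
      by (cases q) (auto simp: layer_def)
  qed
  have "continuous_on layer (\<lambda>p. integral (cbox 0 1) (\<lambda>u. h (fst p * u) (fst (snd p)) (fst (snd (snd p))) (snd (snd (snd p)))))"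
    by (rule integral_continuous_on_param) (use c in \<open>simp add: case_prod_beta\<close>)
  then have "continuous_on layer (\<lambda>p. fst p * integral {0..1} (\<lambda>u. h (fst p * u) (fst (snd p)) (fst (snd (snd p))) (snd (snd (snd p)))))"
    by (intro continuous_intros) simp
  then show ?thesis
    by (rule continuous_on_eq) (auto simp: I0_def)
qed

lemma I0_d1:
  assumes h: "smooth_on layer h" and z: "-1/2 < z" "z < 1/2"
  shows "((\<lambda>s. I0 h x s z t) has_field_derivative I0 (pd 1 h) x y z t) (at y)"
proof -
  have hc: "continuous_on layer (\<lambda>(x,y,z,t). pd 1 h x y z t)"
    by (rule smooth_cont[OF smooth_pd[OF h]]) simp
  have hc0: "continuous_on layer (\<lambda>(x,y,z,t). h x y z t)"
    by (rule smooth_cont[OF h])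
  have "((\<lambda>s. integral {0..1} (\<lambda>u. h (x*u) s z t)) has_field_derivative integral {0..1} (\<lambda>u. pd 1 h (x*u) y z t)) (at y)"
  proof (rule leib[where U=UNIV and k="\<lambda>s u. h (x*u) s z t" and k'="\<lambda>s u. pd 1 h (x*u) s z t"])
    show "\<And>s u. s \<in> UNIV \<Longrightarrow> u \<in> {0..1} \<Longrightarrow> ((\<lambda>s. h (x*u) s z t) has_field_derivative pd 1 h (x*u) s z t) (at s)"
      using z by (intro pd_deriv(2)[OF h]) auto
    have "continuous_on (UNIV \<times> {0..1}) (\<lambda>q. pd 1 h (x * snd q) (fst q) z t)"
      using z by (intro comp_layer[OF hc]) (auto intro!: continuous_intros)
    then show "continuous_on (UNIV \<times> {0..1}) (\<lambda>(s, u). pd 1 h (x*u) s z t)"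
      by (simp add: case_prod_beta)
    show "\<And>s. s \<in> UNIV \<Longrightarrow> continuous_on {0..1} (\<lambda>u. h (x*u) s z t)"
      using z by (intro comp_layer[OF hc0]) (auto intro!: continuous_intros)
  qed auto
  then show ?thesis unfolding I0_def by (rule DERIV_cmult)
qed

lemma I0_d3:
  assumes h: "smooth_on layer h" and z: "-1/2 < z" "z < 1/2"
  shows "((\<lambda>s. I0 h x y z s) has_field_derivative I0 (pd 3 h) x y z t) (at t)"
proof -
  have hc: "continuous_on layer (\<lambda>(x,y,z,t). pd 3 h x y z t)"
    by (rule smooth_cont[OF smooth_pd[OF h]]) simp
  have hc0: "continuous_on layer (\<lambda>(x,y,z,t). h x y z t)"
    by (rule smooth_cont[OF h])
  have "((\<lambda>s. integral {0..1} (\<lambda>u. h (x*u) y z s)) has_field_derivative integral {0..1} (\<lambda>u. pd 3 h (x*u) y z t)) (at t)"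
  proof (rule leib[where U=UNIV and k="\<lambda>s u. h (x*u) y z s" and k'="\<lambda>s u. pd 3 h (x*u) y z s"])
    show "\<And>s u. s \<in> UNIV \<Longrightarrow> u \<in> {0..1} \<Longrightarrow> ((\<lambda>s. h (x*u) y z s) has_field_derivative pd 3 h (x*u) y z s) (at s)"
      using z by (intro pd_deriv(4)[OF h]) auto
    have "continuous_on (UNIV \<times> {0..1}) (\<lambda>q. pd 3 h (x * snd q) y z (fst q))"
      using z by (intro comp_layer[OF hc]) (auto intro!: continuous_intros)
    then show "continuous_on (UNIV \<times> {0..1}) (\<lambda>(s, u). pd 3 h (x*u) y z s)"
      by (simp add: case_prod_beta)
    show "\<And>s. s \<in> UNIV \<Longrightarrow> continuous_on {0..1} (\<lambda>u. h (x*u) y z s)"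
      using z by (intro comp_layer[OF hc0]) (auto intro!: continuous_intros)
  qed auto
  then show ?thesis unfolding I0_def by (rule DERIV_cmult)
qed

lemma I0_d2:
  assumes h: "smooth_on layer h" and z: "-1/2 < z" "z < 1/2"
  shows "((\<lambda>s. I0 h x y s t) has_field_derivative I0 (pd 2 h) x y z t) (at z)"
proof -
  let ?U = "{-1/2<..<1/2::real}"
  have hc: "continuous_on layer (\<lambda>(x,y,z,t). pd 2 h x y z t)"
    by (rule smooth_cont[OF smooth_pd[OF h]]) simp
  have hc0: "continuous_on layer (\<lambda>(x,y,z,t). h x y z t)"
    by (rule smooth_cont[OF h])
  have "((\<lambda>s. integral {0..1} (\<lambda>u. h (x*u) y s t)) has_field_derivative integral {0..1} (\<lambda>u. pd 2 h (x*u) y z t)) (at z)"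
  proof (rule leib[where U="?U" and k="\<lambda>s u. h (x*u) y s t" and k'="\<lambda>s u. pd 2 h (x*u) y s t"])
    show "\<And>s u. s \<in> ?U \<Longrightarrow> u \<in> {0..1} \<Longrightarrow> ((\<lambda>s. h (x*u) y s t) has_field_derivative pd 2 h (x*u) y s t) (at s)"
      by (intro pd_deriv(3)[OF h]) auto
    have "continuous_on (?U \<times> {0..1}) (\<lambda>q. pd 2 h (x * snd q) y (fst q) t)"
      by (intro comp_layer[OF hc]) (auto intro!: continuous_intros)
    then show "continuous_on (?U \<times> {0..1}) (\<lambda>(s, u). pd 2 h (x*u) y s t)"
      by (simp add: case_prod_beta)
    show "\<And>s. s \<in> ?U \<Longrightarrow> continuous_on {0..1} (\<lambda>u. h (x*u) y s t)"
      by (intro comp_layer[OF hc0]) (auto intro!: continuous_intros)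
  qed (use z in auto)
  then show ?thesis unfolding I0_def by (rule DERIV_cmult)
qed

lemma I0_d0:
  assumes h: "smooth_on layer h" and z: "-1/2 < z" "z < 1/2"
  shows "((\<lambda>s. I0 h s y z t) has_field_derivative h x y z t) (at x)"
proof -
  have hc: "continuous_on layer (\<lambda>(x,y,z,t). pd 0 h x y z t)"
    by (rule smooth_cont[OF smooth_pd[OF h]]) simp
  have hc0: "continuous_on layer (\<lambda>(x,y,z,t). h x y z t)"
    by (rule smooth_cont[OF h])
  have D: "((\<lambda>s. h (s*u) y z t) has_field_derivative pd 0 h (s*u) y z t * u) (at s)" for s u
  proof -
    have "((\<lambda>w. h w y z t) has_field_derivative pd 0 h (s*u) y z t) (at (s*u))"
      by (rule pd_deriv(1)[OF h z])
    then show ?thesis by (rule DERIV_chain2) (auto intro!: derivative_eq_intros)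
  qed
  have I: "((\<lambda>s. integral {0..1} (\<lambda>u. h (s*u) y z t)) has_field_derivative integral {0..1} (\<lambda>u. pd 0 h (x*u) y z t * u)) (at x)"
  proof (rule leib[where U=UNIV and k="\<lambda>s u. h (s*u) y z t" and k'="\<lambda>s u. pd 0 h (s*u) y z t * u"])
    show "\<And>s u. s \<in> UNIV \<Longrightarrow> u \<in> {0..1} \<Longrightarrow> ((\<lambda>s. h (s * u) y z t) has_field_derivative pd 0 h (s * u) y z t * u) (at s)"
      by (rule D)
    have "continuous_on (UNIV \<times> {0..1}) (\<lambda>q. pd 0 h (fst q * snd q) y z t)"
      using z by (intro comp_layer[OF hc]) (auto intro!: continuous_intros)
    then have "continuous_on (UNIV \<times> {0..1}) (\<lambda>q. pd 0 h (fst q * snd q) y z t * snd q)"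
      by (intro continuous_intros)
    then show "continuous_on (UNIV \<times> {0..1}) (\<lambda>(s, u). pd 0 h (s * u) y z t * u)"
      by (simp add: case_prod_beta)
    show "\<And>s. s \<in> UNIV \<Longrightarrow> continuous_on {0..1} (\<lambda>u. h (s * u) y z t)"
      using z by (intro comp_layer[OF hc0]) (auto intro!: continuous_intros)
  qed auto
  have P: "((\<lambda>s. I0 h s y z t) has_field_derivative
      x * integral {0..1} (\<lambda>u. pd 0 h (x*u) y z t * u) + 1 * integral {0..1} (\<lambda>u. h (x*u) y z t)) (at x)"
    unfolding I0_def by (rule DERIV_mult'[OF DERIV_ident I])
  have c1: "continuous_on {0..1} (\<lambda>u. h (x*u) y z t)"
    using z by (intro comp_layer[OF hc0]) (auto intro!: continuous_intros)
  have c2: "continuous_on {0..1} (\<lambda>u. pd 0 h (x*u) y z t)"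
    using z by (intro comp_layer[OF hc]) (auto intro!: continuous_intros)
  have "((\<lambda>u. u * (pd 0 h (x*u) y z t * x) + 1 * h (x*u) y z t) has_integral (1 * h (x*1) y z t - 0 * h (x*0) y z t)) {0..1}"
  proof (rule fundamental_theorem_of_calculus)
    fix u :: real assume u: "u \<in> {0..1}"
    have "((\<lambda>w. h w y z t) has_field_derivative pd 0 h (x*u) y z t) (at (x*u))"
      by (rule pd_deriv(1)[OF h z])
    then have "((\<lambda>u. h (x*u) y z t) has_field_derivative pd 0 h (x*u) y z t * x) (at u)"
      by (rule DERIV_chain2) (auto intro!: derivative_eq_intros)
    then have "((\<lambda>u. u * h (x*u) y z t) has_field_derivative u * (pd 0 h (x*u) y z t * x) + 1 * h (x*u) y z t) (at u)"
      by (rule DERIV_mult'[OF DERIV_ident])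
    then show "((\<lambda>u. u * h (x*u) y z t) has_vector_derivative u * (pd 0 h (x*u) y z t * x) + 1 * h (x*u) y z t) (at u within {0..1})"
      by (simp add: has_real_derivative_iff_has_vector_derivative[symmetric] has_field_derivative_at_within)
  qed simp
  then have "integral {0..1} (\<lambda>u. u * (pd 0 h (x*u) y z t * x) + 1 * h (x*u) y z t) = 1 * h (x*1) y z t - 0 * h (x*0) y z t"
    by (rule integral_unique)
  moreover have "integral {0..1} (\<lambda>u. u * (pd 0 h (x*u) y z t * x) + 1 * h (x*u) y z t)
      = x * integral {0..1} (\<lambda>u. pd 0 h (x*u) y z t * u) + 1 * integral {0..1} (\<lambda>u. h (x*u) y z t)"
  proof -
    have "integral {0..1} (\<lambda>u. u * (pd 0 h (x*u) y z t * x) + 1 * h (x*u) y z t)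
      = integral {0..1} (\<lambda>u. x * (pd 0 h (x*u) y z t * u)) + integral {0..1} (\<lambda>u. h (x*u) y z t)"
    proof -
      have e: "(\<lambda>u. u * (pd 0 h (x*u) y z t * x) + 1 * h (x*u) y z t) = (\<lambda>u. x * (pd 0 h (x*u) y z t * u) + h (x*u) y z t)"
        by (simp add: algebra_simps)
      show ?thesis unfolding e
        by (rule integral_add) (auto intro!: integrable_continuous_interval continuous_intros c1 c2)
    qed
    then show ?thesis by simp
  qed
  ultimately show ?thesis using P by simp
qed

lemma pd_I0:
  assumes h: "smooth_on layer h" and z: "-1/2 < z" "z < 1/2" and i: "i \<le> 3"
  shows "pd i (I0 h) x y z t = (if i = 0 then h x y z t else I0 (pd i h) x y z t)"
    "pdiff i (I0 h) x y z t"
proof -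
  have "i = 0 \<or> i = 1 \<or> i = 2 \<or> i = 3" using i by auto
  then show "pd i (I0 h) x y z t = (if i = 0 then h x y z t else I0 (pd i h) x y z t)"
    using I0_d0[OF h z, of y t x] I0_d1[OF h z, of x t y] I0_d2[OF h z, of x y t] I0_d3[OF h z, of x y t]
    by (auto simp: pd_def DERIV_imp_deriv)
  show "pdiff i (I0 h) x y z t"
    using \<open>i = 0 \<or> i = 1 \<or> i = 2 \<or> i = 3\<close>
      I0_d0[OF h z, of y t x] I0_d1[OF h z, of x t y] I0_d2[OF h z, of x y t] I0_d3[OF h z, of x y t]
    by (auto simp: pdiff_def real_differentiable_def)
qed

lemma smooth_I0:
  assumes g: "smooth_on layer g"
  shows "smooth_on layer (I0 g)"
proof (rule smooth_closure[where S="{iter_pd ds g |ds. set ds \<subseteq> {0..3}} \<union> {I0 (iter_pd ds g) |ds. set ds \<subseteq> {0..3}}"])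
  fix H assume "H \<in> {iter_pd ds g |ds. set ds \<subseteq> {0..3}} \<union> {I0 (iter_pd ds g) |ds. set ds \<subseteq> {0..3}}"
  then obtain ds where ds: "set ds \<subseteq> {0..3}" and H: "H = iter_pd ds g \<or> H = I0 (iter_pd ds g)" by blast
  have sm: "smooth_on layer (iter_pd ds g)" by (rule smooth_iter[OF g ds])
  show "continuous_on layer (\<lambda>(x,y,z,t). H x y z t)"
    using H smooth_cont[OF sm] I0_cont[OF smooth_cont[OF sm]] by auto
  show "\<And>i x y z t. i \<le> 3 \<Longrightarrow> (x,y,z,t)\<in>layer \<Longrightarrow> pdiff i H x y z t"
    using H smooth_pdiff[OF sm] pd_I0(2)[OF sm] by auto
  show "\<And>i. i \<le> 3 \<Longrightarrow> \<exists>H'\<in>{iter_pd ds g |ds. set ds \<subseteq> {0..3}} \<union> {I0 (iter_pd ds g) |ds. set ds \<subseteq> {0..3}}.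
      \<forall>(x,y,z,t)\<in>layer. pd i H x y z t = H' x y z t"
  proof -
    fix i :: nat assume i: "i \<le> 3"
    have ids: "set (i#ds) \<subseteq> {0..3}" using ds i by auto
    have e: "pd i (iter_pd ds g) = iter_pd (i#ds) g" by (simp add: iter_pd_def)
    show "\<exists>H'\<in>{iter_pd ds g |ds. set ds \<subseteq> {0..3}} \<union> {I0 (iter_pd ds g) |ds. set ds \<subseteq> {0..3}}.
      \<forall>(x,y,z,t)\<in>layer. pd i H x y z t = H' x y z t"
    proof (cases "H = iter_pd ds g")
      case True
      then show ?thesis using ids e by blast
    next
      case False
      then have HI: "H = I0 (iter_pd ds g)" using H by blast
      show ?thesis
      proof (cases "i = 0")
        case True
        have "\<forall>(x,y,z,t)\<in>layer. pd i H x y z t = iter_pd ds g x y z t"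
          using pd_I0(1)[OF sm _ _ i] True HI by auto
        then show ?thesis using ds by blast
      next
        case False
        have "\<forall>(x,y,z,t)\<in>layer. pd i H x y z t = I0 (iter_pd (i#ds) g) x y z t"
          using pd_I0(1)[OF sm _ _ i] False HI e by auto
        then show ?thesis using ids by blast
      qed
    qed
  qed
next
  show "I0 g \<in> {iter_pd ds g |ds. set ds \<subseteq> {0..3}} \<union> {I0 (iter_pd ds g) |ds. set ds \<subseteq> {0..3}}"
    by (rule UnI2, rule CollectI, rule exI[of _ "[]"]) (simp add: iter_pd_def)
qed


definition rz :: "field \<Rightarrow> field" where
  "rz g = (\<lambda>x y z t. g x y 0 t)"

lemma pd_rz: "pd i (rz h) = (if i = 2 then (\<lambda>x y z t. 0) else rz (pd i h))"
  by (auto simp: pd_def rz_def fun_eq_iff)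

lemma pd_zero: "pd i (\<lambda>x y z t. 0) = (\<lambda>x y z t. 0)"
  by (auto simp: pd_def fun_eq_iff)

lemma smooth_rz:
  assumes g: "smooth_on layer g"
  shows "smooth_on layer (rz g)"
proof (rule smooth_closure[where S="{rz (iter_pd ds g) |ds. set ds \<subseteq> {0..3}} \<union> {(\<lambda>x y z t. 0)}"])
  fix H assume HS: "H \<in> {rz (iter_pd ds g) |ds. set ds \<subseteq> {0..3}} \<union> {(\<lambda>x y z t. 0)}"
  have e0: "set ([]::nat list) \<subseteq> {0..3}" by simp
  from HS e0 obtain ds where ds: "set ds \<subseteq> {0..3}" and H: "H = rz (iter_pd ds g) \<or> H = (\<lambda>x y z t. 0)" by blast
  have sm: "smooth_on layer (iter_pd ds g)" by (rule smooth_iter[OF g ds])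
  have c: "continuous_on layer (\<lambda>(x,y,z,t). rz (iter_pd ds g) x y z t)"
  proof -
    have "continuous_on layer (\<lambda>q. iter_pd ds g (fst q) (fst (snd q)) 0 (snd (snd (snd q))))"
      by (intro comp_layer[OF smooth_cont[OF sm]]) (auto intro!: continuous_intros)
    then show ?thesis by (rule continuous_on_eq) (auto simp: rz_def)
  qed
  show "continuous_on layer (\<lambda>(x,y,z,t). H x y z t)"
    using H c by (auto intro: continuous_on_const)
  show "\<And>i x y z t. i \<le> 3 \<Longrightarrow> (x,y,z,t)\<in>layer \<Longrightarrow> pdiff i H x y z t"
  proof -
    fix i :: nat and x y z t :: real assume i: "i \<le> 3" and "(x,y,z,t) \<in> layer"
    have p: "pdiff i (iter_pd ds g) x y 0 t" by (rule smooth_pdiff[OF sm i]) auto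
    show "pdiff i H x y z t"
      using H p by (auto simp: pdiff_def rz_def)
  qed
  show "\<And>i. i \<le> 3 \<Longrightarrow> \<exists>H'\<in>{rz (iter_pd ds g) |ds. set ds \<subseteq> {0..3}} \<union> {(\<lambda>x y z t. 0)}.
      \<forall>(x,y,z,t)\<in>layer. pd i H x y z t = H' x y z t"
  proof -
    fix i :: nat assume i: "i \<le> 3"
    have ids: "set (i#ds) \<subseteq> {0..3}" using ds i by auto
    have e: "pd i (iter_pd ds g) = iter_pd (i#ds) g" by (simp add: iter_pd_def)
    have "pd i H = rz (iter_pd (i#ds) g) \<or> pd i H = (\<lambda>x y z t. 0)"
      using H by (auto simp: pd_rz pd_zero e)
    then show "\<exists>H'\<in>{rz (iter_pd ds g) |ds. set ds \<subseteq> {0..3}} \<union> {(\<lambda>x y z t. 0)}.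
      \<forall>(x,y,z,t)\<in>layer. pd i H x y z t = H' x y z t"
    proof (elim disjE)
      assume a: "pd i H = rz (iter_pd (i#ds) g)"
      show ?thesis
      proof (rule bexI[where x="rz (iter_pd (i#ds) g)"])
        show "rz (iter_pd (i#ds) g) \<in> {rz (iter_pd ds g) |ds. set ds \<subseteq> {0..3}} \<union> {(\<lambda>x y z t. 0)}"
          using ids by blast
      qed (simp add: a)
    next
      assume a: "pd i H = (\<lambda>x y z t. 0)"
      show ?thesis
      proof (rule bexI[where x="\<lambda>x y z t. 0"])
        show "(\<lambda>x y z t. 0) \<in> {rz (iter_pd ds g) |ds. set ds \<subseteq> {0..3}} \<union> {(\<lambda>x y z t. 0::real)}"
          by blast
      qed (simp add: a)
    qed
  qed
next
  show "rz g \<in> {rz (iter_pd ds g) |ds. set ds \<subseteq> {0..3}} \<union> {(\<lambda>x y z t. 0)}"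
    by (rule UnI1, rule CollectI, rule exI[of _ "[]"]) (simp add: iter_pd_def)
qed

lemma smooth_lin:
  assumes f: "smooth_on layer f" and g: "smooth_on layer g"
  shows "smooth_on layer (\<lambda>x y z t. f x y z t + c * g x y z t)"
proof (rule smooth_closure[where S="{(\<lambda>x y z t. iter_pd ds f x y z t + c * iter_pd ds g x y z t) |ds. set ds \<subseteq> {0..3}}"])
  fix H assume "H \<in> {(\<lambda>x y z t. iter_pd ds f x y z t + c * iter_pd ds g x y z t) |ds. set ds \<subseteq> {0..3}}"
  then obtain ds where ds: "set ds \<subseteq> {0..3}" and H: "H = (\<lambda>x y z t. iter_pd ds f x y z t + c * iter_pd ds g x y z t)" by blast
  have sf: "smooth_on layer (iter_pd ds f)" by (rule smooth_iter[OF f ds])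
  have sg: "smooth_on layer (iter_pd ds g)" by (rule smooth_iter[OF g ds])
  have "continuous_on layer (\<lambda>p. (\<lambda>(x,y,z,t). iter_pd ds f x y z t) p + c * (\<lambda>(x,y,z,t). iter_pd ds g x y z t) p)"
    by (intro continuous_intros smooth_cont[OF sf] smooth_cont[OF sg])
  then show "continuous_on layer (\<lambda>(x,y,z,t). H x y z t)"
    by (rule continuous_on_eq) (auto simp: H)
  have D: "(\<lambda>s. iter_pd ds f x y s t + c * iter_pd ds g x y s t) differentiable at z \<and>
      (\<lambda>s. iter_pd ds f s y z t + c * iter_pd ds g s y z t) differentiable at x \<and>
      (\<lambda>s. iter_pd ds f x s z t + c * iter_pd ds g x s z t) differentiable at y \<and>
      (\<lambda>s. iter_pd ds f x y z s + c * iter_pd ds g x y z s) differentiable at t \<and>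
      pd 0 H x y z t = pd 0 (iter_pd ds f) x y z t + c * pd 0 (iter_pd ds g) x y z t \<and>
      pd 1 H x y z t = pd 1 (iter_pd ds f) x y z t + c * pd 1 (iter_pd ds g) x y z t \<and>
      pd 2 H x y z t = pd 2 (iter_pd ds f) x y z t + c * pd 2 (iter_pd ds g) x y z t \<and>
      pd 3 H x y z t = pd 3 (iter_pd ds f) x y z t + c * pd 3 (iter_pd ds g) x y z t"
    if "-1/2 < z" "z < 1/2" for x y z t
  proof -
    note F = pd_deriv[OF sf that, where x=x and y=y and t=t] and G = pd_deriv[OF sg that, where x=x and y=y and t=t]
    have a: "((\<lambda>s. iter_pd ds f s y z t + c * iter_pd ds g s y z t) has_field_derivative pd 0 (iter_pd ds f) x y z t + c * pd 0 (iter_pd ds g) x y z t) (at x)"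
      by (rule DERIV_add[OF F(1) DERIV_cmult[OF G(1)]])
    have b: "((\<lambda>s. iter_pd ds f x s z t + c * iter_pd ds g x s z t) has_field_derivative pd 1 (iter_pd ds f) x y z t + c * pd 1 (iter_pd ds g) x y z t) (at y)"
      by (rule DERIV_add[OF F(2) DERIV_cmult[OF G(2)]])
    have cc: "((\<lambda>s. iter_pd ds f x y s t + c * iter_pd ds g x y s t) has_field_derivative pd 2 (iter_pd ds f) x y z t + c * pd 2 (iter_pd ds g) x y z t) (at z)"
      by (rule DERIV_add[OF F(3) DERIV_cmult[OF G(3)]])
    have d: "((\<lambda>s. iter_pd ds f x y z s + c * iter_pd ds g x y z s) has_field_derivative pd 3 (iter_pd ds f) x y z t + c * pd 3 (iter_pd ds g) x y z t) (at t)"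
      by (rule DERIV_add[OF F(4) DERIV_cmult[OF G(4)]])
    show ?thesis using a b cc d
      by (auto simp: H pd_def real_differentiable_def DERIV_imp_deriv)
  qed
  show "\<And>i x y z t. i \<le> 3 \<Longrightarrow> (x,y,z,t)\<in>layer \<Longrightarrow> pdiff i H x y z t"
    using D by (auto simp: pdiff_def H)
  show "\<And>i. i \<le> 3 \<Longrightarrow> \<exists>H'\<in>{(\<lambda>x y z t. iter_pd ds f x y z t + c * iter_pd ds g x y z t) |ds. set ds \<subseteq> {0..3}}.
      \<forall>(x,y,z,t)\<in>layer. pd i H x y z t = H' x y z t"
  proof -
    fix i :: nat assume i: "i \<le> 3"
    have ids: "set (i#ds) \<subseteq> {0..3}" using ds i by auto
    have "i = 0 \<or> i = 1 \<or> i = 2 \<or> i = 3" using i by auto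
    then have "\<forall>(x,y,z,t)\<in>layer. pd i H x y z t = iter_pd (i#ds) f x y z t + c * iter_pd (i#ds) g x y z t"
      using D by (auto simp: iter_pd_def)
    then show "\<exists>H'\<in>{(\<lambda>x y z t. iter_pd ds f x y z t + c * iter_pd ds g x y z t) |ds. set ds \<subseteq> {0..3}}.
      \<forall>(x,y,z,t)\<in>layer. pd i H x y z t = H' x y z t"
    proof (rule bexI[where x="\<lambda>x y z t. iter_pd (i#ds) f x y z t + c * iter_pd (i#ds) g x y z t"])
      show "(\<lambda>x y z t. iter_pd (i#ds) f x y z t + c * iter_pd (i#ds) g x y z t)
        \<in> {(\<lambda>x y z t. iter_pd ds f x y z t + c * iter_pd ds g x y z t) |ds. set ds \<subseteq> {0..3}}"
        using ids by blast
    qed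
  qed
next
  show "(\<lambda>x y z t. f x y z t + c * g x y z t) \<in> {(\<lambda>x y z t. iter_pd ds f x y z t + c * iter_pd ds g x y z t) |ds. set ds \<subseteq> {0..3}}"
    by (rule CollectI, rule exI[of _ "[]"]) (simp add: iter_pd_def)
qed



lemma pd_lin:
  assumes f: "smooth_on layer f" and g: "smooth_on layer g" and z: "-1/2 < z" "z < 1/2"
  shows "pd 0 (\<lambda>x y z t. f x y z t + c * g x y z t) x y z t = pd 0 f x y z t + c * pd 0 g x y z t"
    "pd 1 (\<lambda>x y z t. f x y z t + c * g x y z t) x y z t = pd 1 f x y z t + c * pd 1 g x y z t"
    "pd 2 (\<lambda>x y z t. f x y z t + c * g x y z t) x y z t = pd 2 f x y z t + c * pd 2 g x y z t"
proof -
  note F = pd_deriv[OF f z, where x=x and y=y and t=t] and G = pd_deriv[OF g z, where x=x and y=y and t=t]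
  show "pd 0 (\<lambda>x y z t. f x y z t + c * g x y z t) x y z t = pd 0 f x y z t + c * pd 0 g x y z t"
    using DERIV_add[OF F(1) DERIV_cmult[OF G(1)]] by (simp add: pd_def DERIV_imp_deriv)
  show "pd 1 (\<lambda>x y z t. f x y z t + c * g x y z t) x y z t = pd 1 f x y z t + c * pd 1 g x y z t"
    using DERIV_add[OF F(2) DERIV_cmult[OF G(2)]] by (simp add: pd_def DERIV_imp_deriv)
  show "pd 2 (\<lambda>x y z t. f x y z t + c * g x y z t) x y z t = pd 2 f x y z t + c * pd 2 g x y z t"
    using DERIV_add[OF F(3) DERIV_cmult[OF G(3)]] by (simp add: pd_def DERIV_imp_deriv)
qed

lemma pd1_indep:
  assumes "indep_y f" "-1/2 < z" "z < 1/2"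
  shows "pd 1 f x y z t = 0"
proof -
  have "(\<lambda>s. f x s z t) = (\<lambda>s. f x y z t)" using assms by (auto simp: indep_y_def)
  then show ?thesis by (simp add: pd_def)
qed

lemma I2_cong:
  assumes "\<And>s. -1/2 < s \<Longrightarrow> s < 1/2 \<Longrightarrow> f x y s t = g x y s t" "-1/2 < z" "z < 1/2"
  shows "I2 f x y z t = I2 g x y z t"
  unfolding I2_def using assms zu_bound[OF assms(2,3)] by (auto intro!: integral_cong)


theorem theorem1:
  fixes P R O1 O3 :: real and vx vy vz \<theta> p :: field
  assumes "smooth_on layer vx" "smooth_on layer vy" "smooth_on layer vz"
      and "smooth_on layer \<theta>" "smooth_on layer p"
      and "boussinesq P R O1 0 O3 vx vy vz \<theta> p"
      and "indep_y vx" "indep_y vy" "indep_y vz" "indep_y \<theta>"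
  shows "\<forall>O2::real. \<exists>p'::field. smooth_on layer p' \<and>
           boussinesq P R O1 O2 O3 vx vy vz \<theta> p'"
proof
  fix O2 :: real
  define psi :: field where "psi = (\<lambda>x y z t. I2 vx x y z t + (-1) * I0 (rz vz) x y z t)"
  define q :: field where "q = (\<lambda>x y z t. p x y z t + (P * O2) * psi x y z t)"
  have svx: "smooth_on layer vx" and svz: "smooth_on layer vz" and sp: "smooth_on layer p"
    using assms by auto
  have s1: "smooth_on layer (I2 vx)" by (rule smooth_I2[OF svx])
  have s2: "smooth_on layer (I0 (rz vz))" by (rule smooth_I0[OF smooth_rz[OF svz]])
  have spsi: "smooth_on layer psi" unfolding psi_def by (rule smooth_lin[OF s1 s2])
  have sq: "smooth_on layer q" unfolding q_def by (rule smooth_lin[OF sp spsi])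
  have old: "\<forall>x y z t. -1/2 < z \<and> z < 1/2 \<longrightarrow>
      (let w1 = dY vz x y z t - dZ vy x y z t;
           w2 = dZ vx x y z t - dX vz x y z t;
           w3 = dX vy x y z t - dY vx x y z t;
           a = vx x y z t; b = vy x y z t; c = vz x y z t
       in
       dT vx x y z t = (b * w3 - c * w2) + P * (b * O3 - c * 0)
                        + P * lap vx x y z t - dX p x y z t
     \<and> dT vy x y z t = (c * w1 - a * w3) + P * (c * O1 - a * O3)
                        + P * lap vy x y z t - dY p x y z t
     \<and> dT vz x y z t = (a * w2 - b * w1) + P * (a * 0 - b * O1)
                        + P * lap vz x y z t + P * R * \<theta> x y z t - dZ p x y z t
     \<and> dT \<theta> x y z t = - (a * dX \<theta> x y z t + b * dY \<theta> x y z t + c * dZ \<theta> x y z t)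
                        + c + lap \<theta> x y z t
     \<and> dX vx x y z t + dY vy x y z t + dZ vz x y z t = 0)"
    using assms(6) unfolding boussinesq_def by simp
  have dpsi: "dX psi x y z t = - vz x y z t \<and> dY psi x y z t = 0 \<and> dZ psi x y z t = vx x y z t"
    if z: "-1/2 < z" "z < 1/2" for x y z t
  proof -
    have div: "dX vx x y s t = - dZ vz x y s t" if "-1/2 < s" "s < 1/2" for s
    proof -
      have L0: "dY vy x y s t = 0" by (rule pd1_indep[OF assms(8) that])
      have L: "dX vx x y s t + dY vy x y s t + dZ vz x y s t = 0"
        using old that unfolding Let_def by blast
      show ?thesis using L L0 by linarith
    qed
    have a: "I2 (dX vx) x y z t = I2 (\<lambda>x y z t. - dZ vz x y z t) x y z t"
      by (rule I2_cong[OF _ z]) (rule div)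
    have b: "I2 (\<lambda>x y z t. - dZ vz x y z t) x y z t = - I2 (dZ vz) x y z t"
      by (simp add: I2_def)
    have c: "I2 (dZ vz) x y z t = vz x y z t - vz x y 0 t" by (rule I2_ftc[OF svz z])
    have d0: "dX psi x y z t = I2 (dX vx) x y z t + (-1) * rz vz x y z t"
      unfolding psi_def pd_lin[OF s1 s2 z] by (simp add: pd_I2(1)[OF svx z] pd_I0(1)[OF smooth_rz[OF svz] z] pd_rz)
    have d1: "dY psi x y z t = I2 (dY vx) x y z t + (-1) * I0 (rz (dY vz)) x y z t"
      unfolding psi_def pd_lin[OF s1 s2 z] by (simp add: pd_I2(1)[OF svx z] pd_I0(1)[OF smooth_rz[OF svz] z] pd_rz)
    have e1: "I2 (dY vx) x y z t = 0"
    proof -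
      have "I2 (dY vx) x y z t = I2 (\<lambda>x y z t. 0) x y z t"
        by (rule I2_cong[OF _ z]) (rule pd1_indep[OF assms(7)])
      then show ?thesis by (simp add: I2_def)
    qed
    have e2: "I0 (rz (dY vz)) x y z t = 0"
    proof -
      have "\<And>u. dY vz (x*u) y 0 t = 0" by (rule pd1_indep[OF assms(9)]) auto
      then show ?thesis by (simp add: I0_def rz_def)
    qed
    have d2: "dZ psi x y z t = vx x y z t + (-1) * I0 (\<lambda>x y z t. 0) x y z t"
      unfolding psi_def pd_lin[OF s1 s2 z] by (simp add: pd_I2(1)[OF svx z] pd_I0(1)[OF smooth_rz[OF svz] z] pd_rz)
    show ?thesis using a b c d0 d1 d2 e1 e2 by (simp add: I0_def rz_def)
  qed
  have dq: "dX q x y z t = dX p x y z t - P * O2 * vz x y z t \<and> dY q x y z t = dY p x y z t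
      \<and> dZ q x y z t = dZ p x y z t + P * O2 * vx x y z t"
    if z: "-1/2 < z" "z < 1/2" for x y z t
    using dpsi[OF z] unfolding q_def pd_lin[OF sp spsi z] by simp
  show "\<exists>p'::field. smooth_on layer p' \<and> boussinesq P R O1 O2 O3 vx vy vz \<theta> p'"
  proof (intro exI conjI)
    show "smooth_on layer q" by (rule sq)
    show "boussinesq P R O1 O2 O3 vx vy vz \<theta> q"
      unfolding boussinesq_def layer_ball
    proof (intro allI impI)
      fix x y z t :: real assume z: "-1/2 < z \<and> z < 1/2"
      have o: "let w1 = dY vz x y z t - dZ vy x y z t;
           w2 = dZ vx x y z t - dX vz x y z t;
           w3 = dX vy x y z t - dY vx x y z t;
           a = vx x y z t; b = vy x y z t; c = vz x y z t
       in
       dT vx x y z t = (b * w3 - c * w2) + P * (b * O3 - c * 0)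
                        + P * lap vx x y z t - dX p x y z t
     \<and> dT vy x y z t = (c * w1 - a * w3) + P * (c * O1 - a * O3)
                        + P * lap vy x y z t - dY p x y z t
     \<and> dT vz x y z t = (a * w2 - b * w1) + P * (a * 0 - b * O1)
                        + P * lap vz x y z t + P * R * \<theta> x y z t - dZ p x y z t
     \<and> dT \<theta> x y z t = - (a * dX \<theta> x y z t + b * dY \<theta> x y z t + c * dZ \<theta> x y z t)
                        + c + lap \<theta> x y z t
     \<and> dX vx x y z t + dY vy x y z t + dZ vz x y z t = 0"
        using old z by blast
      show "let w1 = dY vz x y z t - dZ vy x y z t;
           w2 = dZ vx x y z t - dX vz x y z t;
           w3 = dX vy x y z t - dY vx x y z t;
           a = vx x y z t; b = vy x y z t; c = vz x y z t
       in
       dT vx x y z t = (b * w3 - c * w2) + P * (b * O3 - c * O2)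
                        + P * lap vx x y z t - dX q x y z t
     \<and> dT vy x y z t = (c * w1 - a * w3) + P * (c * O1 - a * O3)
                        + P * lap vy x y z t - dY q x y z t
     \<and> dT vz x y z t = (a * w2 - b * w1) + P * (a * O2 - b * O1)
                        + P * lap vz x y z t + P * R * \<theta> x y z t - dZ q x y z t
     \<and> dT \<theta> x y z t = - (a * dX \<theta> x y z t + b * dY \<theta> x y z t + c * dZ \<theta> x y z t)
                        + c + lap \<theta> x y z t
     \<and> dX vx x y z t + dY vy x y z t + dZ vz x y z t = 0"
        using o dq[of z x y t] z by (simp add: Let_def algebra_simps)
    qed
  qed
qed

end
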